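(* The sequence $\rho_d$ satisfies $\min_{d\geqslant2}\rho_d>0$, and there is a numerical constant $C>0$ such that $\frac1{C(d+2)^2}\leqslant1-\rho_d$ for all $d\geqslant2$.
   Context: Let $g(\theta)=\cos^{-1}\!\big(\frac{(\pi-\theta)\cos\theta+\sin\theta}{\pi}\big)$, $\breve\theta_0=\pi$, $\breve\theta_i=g(\breve\theta_{i-1})$ for $i\geqslant1$, and $\rho_d:=\frac{2\sin\breve\theta_d}{\pi}+\frac{\pi-2\breve\theta_d}{\pi}\sum_{i=0}^{d-1}\frac{\sin\breve\theta_i}{\pi}\prod_{j=i+1}^{d-1}\frac{\pi-\breve\theta_j}{\pi}$. *)

theory Defs
  imports Complex_Main
begin

definition g_map :: "real \<Rightarrow> real" where
  "g_map \<theta> = arccos (((pi - \<theta>) * cos \<theta> + sin \<theta>) / pi)"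

fun theta_seq :: "nat \<Rightarrow> real" where
  "theta_seq 0 = pi"
| "theta_seq (Suc i) = g_map (theta_seq i)"

definition rho :: "nat \<Rightarrow> real" where
  "rho d = 2 * sin (theta_seq d) / pi
     + (pi - 2 * theta_seq d) / pi *
       (\<Sum>i<d. sin (theta_seq i) / pi * (\<Prod>j\<in>{i+1..<d}. (pi - theta_seq j) / pi))"

end

theory Submission
  imports Defs "HOL-Analysis.Complex_Transcendental"
begin

lemma cos_lb2: fixes x::real assumes "0 \<le> x" shows "1 - x^2/2 \<le> cos x"
proof -
  let ?f = "\<lambda>x::real. cos x - 1 + x^2/2"
  have "\<exists>y. DERIV ?f u :> y \<and> y \<ge> 0" if "0 \<le> u" "u \<le> x" for u
  proof -
    have "DERIV ?f u :> (- sin u + u)" by (auto intro!: derivative_eq_intros)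
    moreover have "- sin u + u \<ge> 0" using sin_x_le_x[OF \<open>0\<le>u\<close>] by simp
    ultimately show ?thesis by blast
  qed
  from DERIV_nonneg_imp_nondecreasing[OF assms this] show ?thesis by simp
qed

lemma sin_lb3: fixes x::real assumes "0 \<le> x" shows "x - x^3/6 \<le> sin x"
proof -
  let ?f = "\<lambda>x::real. sin x - x + x^3/6"
  have "\<exists>y. DERIV ?f u :> y \<and> y \<ge> 0" if "0 \<le> u" "u \<le> x" for u
  proof -
    have "DERIV ?f u :> (cos u - 1 + u^2/2)" by (auto intro!: derivative_eq_intros simp: power2_eq_square)
    moreover have "cos u - 1 + u^2/2 \<ge> 0" using cos_lb2[OF \<open>0\<le>u\<close>] by simp
    ultimately show ?thesis by blast
  qed
  from DERIV_nonneg_imp_nondecreasing[OF assms this] show ?thesis by simp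
qed

lemma cos_ub4: fixes x::real assumes "0 \<le> x" shows "cos x \<le> 1 - x^2/2 + x^4/24"
proof -
  let ?f = "\<lambda>x::real. 1 - x^2/2 + x^4/24 - cos x"
  have "\<exists>y. DERIV ?f u :> y \<and> y \<ge> 0" if "0 \<le> u" "u \<le> x" for u
  proof -
    have "DERIV ?f u :> (- u + u^3/6 + sin u)" by (auto intro!: derivative_eq_intros simp: power2_eq_square)
    moreover have "- u + u^3/6 + sin u \<ge> 0" using sin_lb3[OF \<open>0\<le>u\<close>] by simp
    ultimately show ?thesis by blast
  qed
  from DERIV_nonneg_imp_nondecreasing[OF assms this] show ?thesis by simp
qed

lemma sin_ub5: fixes x::real assumes "0 \<le> x" shows "sin x \<le> x - x^3/6 + x^5/120"
proof -
  let ?f = "\<lambda>x::real. x - x^3/6 + x^5/120 - sin x"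
  have "\<exists>y. DERIV ?f u :> y \<and> y \<ge> 0" if "0 \<le> u" "u \<le> x" for u
  proof -
    have "DERIV ?f u :> (1 - u^2/2 + u^4/24 - cos u)" by (auto intro!: derivative_eq_intros simp: power2_eq_square)
    moreover have "1 - u^2/2 + u^4/24 - cos u \<ge> 0" using cos_ub4[OF \<open>0\<le>u\<close>] by simp
    ultimately show ?thesis by blast
  qed
  from DERIV_nonneg_imp_nondecreasing[OF assms this] show ?thesis by simp
qed

lemma sin_ge_xcos: fixes x::real assumes "0 \<le> x" "x \<le> pi" shows "x * cos x \<le> sin x"
proof -
  let ?f = "\<lambda>x::real. sin x - x * cos x"
  have "\<exists>y. DERIV ?f u :> y \<and> y \<ge> 0" if "0 \<le> u" "u \<le> x" for u
  proof -
    have "DERIV ?f u :> (u * sin u)" by (auto intro!: derivative_eq_intros simp: algebra_simps)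
    moreover have "u * sin u \<ge> 0" using that assms sin_ge_zero by simp
    ultimately show ?thesis by blast
  qed
  from DERIV_nonneg_imp_nondecreasing[OF assms(1) this] show ?thesis by simp
qed

definition hh :: "real \<Rightarrow> real" where
  "hh t = (2 * sin t + (pi - 2*t) * cos t) / pi"

lemma hh_mono: assumes "0 \<le> a" "a \<le> b" "b \<le> pi/2" shows "hh b \<le> hh a"
proof -
  have "\<exists>y. DERIV hh u :> y \<and> y \<le> 0" if "a \<le> u" "u \<le> b" for u
  proof -
    have "DERIV hh u :> (- (pi - 2*u) * sin u / pi)" unfolding hh_def[abs_def]
      by (auto intro!: derivative_eq_intros simp: field_simps)
    moreover have "(pi - 2*u) * sin u \<ge> 0" using that assms sin_ge_zero by simp
    ultimately show ?thesis by (metis divide_nonpos_pos mult_minus_left neg_le_0_iff_le pi_gt_zero)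
  qed
  from DERIV_nonpos_imp_nonincreasing[OF assms(2) this] show ?thesis by simp
qed

definition FF :: "real \<Rightarrow> real" where
  "FF t = ((pi - t) * cos t + sin t) / pi"

lemma key_poly:
  fixes t :: real assumes "0 < t" "t \<le> pi/2"
  shows "(pi - t) * (1 - t^2/2 + t^4/24) + (t - t^3/6 + t^5/120) \<le> pi * (1 - (t/(1+t))^2/2)"
proof -
  have p1: "3.141592653588 \<le> pi" "pi \<le> 3.1415926535899" by (rule pi_approx)+
  have e: "(pi - t) * (1 - t^2/2 + t^4/24) + (t - t^3/6 + t^5/120) = pi - pi*t^2/2 + t^3/3 + pi*t^4/24 - t^5/30"
    by (simp add: field_simps power_def)
  have e2': "\<And>q. pi * (1 - q/2) = pi - pi * t^2/2 + pi * (t^2 - q)/2"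
    by (simp add: field_simps)
  note e2 = e2'[of "(t/(1+t))^2"]
  have d1: "t^2 - (t/(1+t))^2 \<ge> t^3/(1+t)"
  proof -
    have "t^2 - (t/(1+t))^2 = t^3 * (2+t) / (1+t)^2" proof -
      have nz: "1 + t \<noteq> 0" using assms by simp
      have nz2: "1 + (t*t + t*2) \<noteq> 0" using assms by (smt (verit) mult_nonneg_nonneg)
      show ?thesis using nz nz2 by (simp add: field_simps power2_eq_square power3_eq_cube)
    qed
    also have "\<dots> = (t^3/(1+t)) * ((2+t)/(1+t))" by (simp add: power2_eq_square)
    also have "\<dots> \<ge> (t^3/(1+t)) * 1" using assms by (intro mult_left_mono) auto
    finally show ?thesis by simp
  qed
  have d2: "t^3/3 + pi*t^4/24 \<le> pi * (t^3/(1+t)) / 2"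
  proof -
    have "12*pi \<ge> (1+t)*(8 + pi*t)"
    proof -
      have "(1+t)*(8 + pi*t) \<le> (1+pi/2)*(8+pi*(pi/2))"
        using assms by (intro mult_mono add_mono mult_left_mono) auto
      also have "\<dots> \<le> 12*pi"
      proof -
        have p2: "pi \<le> 16/5" "3 \<le> pi" using p1 by simp_all
        have q1: "pi*pi \<le> (16/5)*(16/5)" using p2 by (intro mult_mono) auto
        have q2: "pi*pi*pi \<le> ((16/5)*(16/5))*(16/5)" using p2 q1 by (intro mult_mono) auto
        have "(1+pi/2)*(8+pi*(pi/2)) = 8 + 4*pi + pi*pi/2 + pi*pi*pi/4" by (simp add: algebra_simps)
        thus ?thesis using q1 q2 p2 by simp
      qed
      finally show ?thesis .
    qed
    hence "t^3 * ((1+t)*(8 + pi*t)) \<le> t^3 * (12*pi)" using assms by (intro mult_left_mono) auto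
    thus ?thesis using assms by (simp add: field_simps power_def) 
  qed
  have "t^5/30 \<ge> 0" using assms by simp
  have "pi * (t^3/(1+t)) \<le> pi * (t^2 - (t/(1+t))^2)" using d1 by (intro mult_left_mono) auto
  hence h3: "pi * (t^3/(1+t))/2 \<le> pi * (t^2 - (t/(1+t))^2)/2" by (rule divide_right_mono) simp
  show ?thesis unfolding e e2 using d2 \<open>t^5/30 \<ge> 0\<close> h3 by linarith
qed

lemma FF_bounds:
  fixes t :: real assumes "0 < t" "t \<le> pi/2"
  shows "cos t \<le> FF t" "FF t \<le> cos (t/(1+t))"
proof -
  have "t * cos t \<le> sin t" using assms by (intro sin_ge_xcos) auto
  hence "pi * cos t \<le> (pi - t) * cos t + sin t" by (simp add: algebra_simps)
  thus "cos t \<le> FF t" unfolding FF_def by (simp add: field_simps)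
  have c4: "(pi - t) * cos t \<le> (pi - t) * (1 - t^2/2 + t^4/24)"
    using assms cos_ub4[of t] by (intro mult_left_mono) auto
  have s5: "sin t \<le> t - t^3/6 + t^5/120" using assms sin_ub5[of t] by simp
  have c2: "pi * (1 - (t/(1+t))^2/2) \<le> pi * cos (t/(1+t))"
    using assms cos_lb2[of "t/(1+t)"] by (intro mult_left_mono) auto
  have "(pi - t) * cos t + sin t \<le> pi * cos (t/(1+t))"
    using c4 s5 c2 key_poly[OF assms] by linarith
  thus "FF t \<le> cos (t/(1+t))" unfolding FF_def by (simp add: field_simps)
qed

lemma g_bounds:
  fixes t :: real assumes "0 < t" "t \<le> pi/2"
  shows "t/(1+t) \<le> g_map t" "g_map t \<le> t" "cos (g_map t) = FF t"
proof -
  note b = FF_bounds[OF assms]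
  have ct: "0 \<le> cos t" using assms by (intro cos_ge_zero) auto
  have ps1: "t/(1+t) \<le> t/1" using assms by (intro divide_left_mono) auto
  have ps: "0 \<le> t/(1+t)" "t/(1+t) \<le> pi" using assms ps1 pi_gt_zero by simp_all
  have c1: "cos (t/(1+t)) \<le> 1" by simp
  have F1: "-1 \<le> FF t" "FF t \<le> 1" using b ct c1 by linarith+
  have gF: "g_map t = arccos (FF t)" unfolding g_map_def FF_def by simp
  show "cos (g_map t) = FF t" unfolding gF using F1 by (intro cos_arccos) auto
  have "arccos (FF t) \<le> arccos (cos t)"
    by (rule arccos_le_arccos) (use b ct F1 c1 in linarith)+
  thus "g_map t \<le> t" unfolding gF using assms by (simp add: arccos_cos)
  have "arccos (cos (t/(1+t))) \<le> arccos (FF t)"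
    by (rule arccos_le_arccos) (use b ct F1 c1 in linarith)+
  thus "t/(1+t) \<le> g_map t" unfolding gF using ps by (simp add: arccos_cos)
qed

lemma theta1: "theta_seq 1 = pi/2"
  by (simp add: g_map_def)

lemma theta_props:
  assumes "1 \<le> d"
  shows "0 < theta_seq d \<and> theta_seq d \<le> pi/2 \<and> 1 / theta_seq d \<le> real d"
  using assms
proof (induction d rule: dec_induct)
  case base
  have "1 / (pi/2) \<le> 1" using pi_ge_two by (simp add: field_simps)
  then show ?case by (simp add: g_map_def)
next
  case (step n)
  let ?t = "theta_seq n"
  have t0: "0 < ?t" "?t \<le> pi/2" "1/?t \<le> real n" using step.IH by auto
  note gb = g_bounds[OF t0(1,2)]
  have pos: "0 < ?t/(1+?t)" using t0 by simp
  have "theta_seq (Suc n) = g_map ?t" by simp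
  hence s1: "?t/(1+?t) \<le> theta_seq (Suc n)" "theta_seq (Suc n) \<le> ?t" using gb by auto
  have "1 / theta_seq (Suc n) \<le> 1 / (?t/(1+?t))"
    using s1 pos by (intro divide_left_mono) auto
  also have "\<dots> = 1/?t + 1" using t0 by (simp add: field_simps)
  also have "\<dots> \<le> real (Suc n)" using t0 by simp
  finally have "1 / theta_seq (Suc n) \<le> real (Suc n)" .
  moreover have "0 < theta_seq (Suc n)" using s1(1) pos by linarith
  moreover have "theta_seq (Suc n) \<le> pi/2" using s1(2) t0 by linarith
  ultimately show ?case by blast
qed

lemma theta_dec:
  assumes "1 \<le> d" shows "theta_seq (Suc d) \<le> theta_seq d"
  using theta_props[OF assms] g_bounds[of "theta_seq d"] by simp

lemma theta_le2:
  assumes "2 \<le> d" shows "theta_seq d \<le> theta_seq 2"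
  using assms
proof (induction d rule: dec_induct)
  case base then show ?case by simp
next
  case (step n) then show ?case using theta_dec[of n] by simp
qed

definition SS :: "nat \<Rightarrow> real" where
  "SS d = (\<Sum>i<d. sin (theta_seq i) / pi * (\<Prod>j\<in>{i+1..<d}. (pi - theta_seq j) / pi))"

lemma SS_Suc: "SS (Suc d) = SS d * ((pi - theta_seq d)/pi) + sin (theta_seq d) / pi"
proof -
  have "SS (Suc d) = (\<Sum>i<d. sin (theta_seq i) / pi * (\<Prod>j\<in>{i+1..<Suc d}. (pi - theta_seq j) / pi))
      + sin (theta_seq d) / pi"
    unfolding SS_def by simp
  also have "(\<Sum>i<d. sin (theta_seq i) / pi * (\<Prod>j\<in>{i+1..<Suc d}. (pi - theta_seq j) / pi))
     = (\<Sum>i<d. sin (theta_seq i) / pi * (\<Prod>j\<in>{i+1..<d}. (pi - theta_seq j) / pi) * ((pi - theta_seq d)/pi))"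
  proof (rule sum.cong)
    fix i assume "i \<in> {..<d}"
    hence "i + 1 \<le> d" by simp
    thus "sin (theta_seq i) / pi * (\<Prod>j\<in>{i+1..<Suc d}. (pi - theta_seq j) / pi)
      = sin (theta_seq i) / pi * (\<Prod>j\<in>{i+1..<d}. (pi - theta_seq j) / pi) * ((pi - theta_seq d)/pi)"
      by (simp add: prod.atLeastLessThan_Suc)
  qed simp
  also have "\<dots> = SS d * ((pi - theta_seq d)/pi)" unfolding SS_def by (simp only: sum_distrib_right)
  finally show ?thesis .
qed

lemma SS_cos: assumes "1 \<le> d" shows "SS d = cos (theta_seq d)"
  using assms
proof (induction d rule: dec_induct)
  case base then show ?case by (simp add: SS_def g_map_def)
next
  case (step n)
  have t0: "0 < theta_seq n" "theta_seq n \<le> pi/2" using theta_props[OF step.hyps(1)] by auto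
  have "cos (theta_seq (Suc n)) = FF (theta_seq n)" using g_bounds(3)[OF t0] by simp
  then show ?case unfolding SS_Suc step.IH FF_def by (simp add: field_simps)
qed

lemma rho_hh: assumes "1 \<le> d" shows "rho d = hh (theta_seq d)"
proof -
  have "rho d = 2 * sin (theta_seq d) / pi + (pi - 2 * theta_seq d) / pi * SS d"
    unfolding rho_def SS_def by simp
  also have "\<dots> = hh (theta_seq d)" unfolding SS_cos[OF assms] hh_def by (simp add: field_simps)
  finally show ?thesis .
qed

lemma hh_upper:
  fixes t :: real assumes "0 \<le> t" "t \<le> pi/2"
  shows "hh t \<le> 1 - t^2/32"
proof -
  have p2: "pi \<le> 16/5" "3 \<le> pi" using pi_approx by simp_all
  have c4: "(pi - 2*t) * cos t \<le> (pi - 2*t) * (1 - t^2/2 + t^4/24)"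
    using assms cos_ub4[of t] by (intro mult_left_mono) auto
  have s5: "sin t \<le> t - t^3/6 + t^5/120" using assms sin_ub5[of t] by simp
  have e: "2*(t - t^3/6 + t^5/120) + (pi - 2*t) * (1 - t^2/2 + t^4/24)
     = pi - pi*t^2/2 + 2*t^3/3 + pi*t^4/24 - t^5/15"
    by (simp add: field_simps power_def)
  have inner: "2*t/3 + pi*t^2/24 \<le> 15*pi/32"
  proof -
    have "t^2 \<le> (pi/2)^2" using assms by (intro power_mono) auto
    hence "pi*t^2 \<le> pi*(pi/2)^2" by (intro mult_left_mono) auto
    moreover have "pi*(pi/2)^2 \<le> 13*pi/4"
    proof -
      have "pi*pi \<le> (16/5)*(16/5)" using p2 by (intro mult_mono) auto
      hence "pi*pi \<le> 13" by simp
      hence "pi*(pi*pi) \<le> pi*13" by (intro mult_left_mono) auto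
      thus ?thesis by (simp add: power2_eq_square algebra_simps)
    qed
    ultimately show ?thesis using assms by linarith
  qed
  hence "t^2 * (2*t/3 + pi*t^2/24) \<le> t^2 * (15*pi/32)" by (intro mult_left_mono) auto
  hence k: "2*t^3/3 + pi*t^4/24 \<le> 15*pi*t^2/32" by (simp add: algebra_simps power_def)
  have "t^5/15 \<ge> 0" using assms by simp
  have "2 * sin t + (pi - 2*t) * cos t \<le> 2*(t - t^3/6 + t^5/120) + (pi - 2*t) * (1 - t^2/2 + t^4/24)"
    using c4 s5 by (intro add_mono) simp_all
  also have "\<dots> \<le> pi - pi*t^2/32" unfolding e using k \<open>t^5/15 \<ge> 0\<close> by linarith
  also have "\<dots> = pi * (1 - t^2/32)" by (simp add: algebra_simps)
  finally have "2 * sin t + (pi - 2*t) * cos t \<le> pi * (1 - t^2/32)" .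
  thus ?thesis unfolding hh_def by (simp add: field_simps)
qed

theorem lemma22:
  shows "(\<exists>d0\<ge>2. (\<forall>d\<ge>2. rho d0 \<le> rho d) \<and> rho d0 > 0)
       \<and> (\<exists>C>0. \<forall>d::nat\<ge>2. 1 / (C * (real d + 2)^2) \<le> 1 - rho d)"
proof
  have t2: "0 < theta_seq 2" "theta_seq 2 \<le> pi/2" using theta_props[of 2] by auto
  have "rho 2 > 0"
  proof -
    have "0 < sin (theta_seq 2)" using t2 by (intro sin_gt_zero) auto
    moreover have "0 \<le> (pi - 2 * theta_seq 2) * cos (theta_seq 2)"
      using t2 by (intro mult_nonneg_nonneg cos_ge_zero) auto
    ultimately show ?thesis unfolding rho_hh[of 2, simplified] hh_def by simp
  qed
  moreover have "\<forall>d\<ge>2. rho 2 \<le> rho d"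
  proof (intro allI impI)
    fix d :: nat assume d: "2 \<le> d"
    have "0 < theta_seq d" using theta_props[of d] d by auto
    moreover have "theta_seq d \<le> theta_seq 2" using theta_le2[OF d] .
    ultimately have "hh (theta_seq 2) \<le> hh (theta_seq d)" using t2 by (intro hh_mono) auto
    thus "rho 2 \<le> rho d" using rho_hh[of 2] rho_hh[of d] d by simp
  qed
  ultimately show "\<exists>d0\<ge>2. (\<forall>d\<ge>2. rho d0 \<le> rho d) \<and> rho d0 > 0" by blast
next
  show "\<exists>C>0. \<forall>d::nat\<ge>2. 1 / (C * (real d + 2)^2) \<le> 1 - rho d"
  proof (intro exI[of _ 32] conjI allI impI)
    fix d :: nat assume d: "2 \<le> d"
    have tp: "0 < theta_seq d" "theta_seq d \<le> pi/2" "1 / theta_seq d \<le> real d"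
      using theta_props[of d] d by auto
    have "1 / (real d + 2) \<le> 1 / real d" using d by (intro divide_left_mono) auto
    also have "1 / real d \<le> theta_seq d" using tp d by (simp add: field_simps)
    finally have th: "1 / (real d + 2) \<le> theta_seq d" .
    have "(1 / (real d + 2))^2 \<le> (theta_seq d)^2" using th by (intro power_mono) auto
    hence "1 / (32 * (real d + 2)^2) \<le> (theta_seq d)^2 / 32" by (simp add: power_divide)
    also have "\<dots> \<le> 1 - rho d" using hh_upper[of "theta_seq d"] tp rho_hh[of d] d by simp
    finally show "1 / (32 * (real d + 2)^2) \<le> 1 - rho d" .
  qed simp
qed

end
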